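(* Let $H$ be a balanced graph, fix a sequence of edges defining $H_d$, and let $uv \in E(K_n)$. If $p = p(n)$ and $d = d(n)$ are chosen so that $p^{\lambda(H)} n \geqslant \omega\, v(H)\, d$ and $\omega^{(v(H)-2)d} \geqslant n$ for some function $\omega = \omega(n)$, and $pn \to \infty$, then $\mathbb{E}\big(X_d(uv)\big) \to \infty$ as $n \to \infty$.
   Context: $H$ is a graph with $v(H) \geqslant 4$; it is balanced if $e(H) \geqslant 2v(H)-2$ and $\frac{e(F)-1}{v(F)-2} \leqslant \lambda(H) := \frac{e(H)-2}{v(H)-2}$ for every proper subgraph $F \subsetneq H$ with $v(F) \geqslant 3$. The graph $H_d$: choose a sequence of edges $(e_1, e_2, \ldots)$ of $H$ such that $e_j$ and $e_{j+1}$ share no endpoint for every $j$. Take copies $H^{(1)}, \ldots, H^{(d)}$ of $H$ and, for each $1 \leqslant j \leqslant d-1$, identify the endpoints of the edge $e_{j+1}$ in $H^{(j)}$ with the endpoints of $e_{j+1}$ in $H^{(j+1)}$. Then remove the edge $e_1$ from $H^{(1)}$ and, for each $1 \leqslant j \leqslant d-1$, remove the (shared) edge $e_{j+1}$ of $H^{(j)} \cap H^{(j+1)}$. The root of $H_d$ is the pair of endpoints of $e_1$ in $H^{(1)}$ (a non-edge of $H_d$). $X_d(uv)$ is the number of copies of $H_d$ in $G_{n,p}$ (the Erdős–Rényi random graph on $[n]$) rooted at $uv$, i.e. whose root is mapped onto $\{u,v\}$. *)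

theory Defs
  imports "HOL-Probability.Probability"
begin

definition simple_graph :: "'a set \<Rightarrow> 'a set set \<Rightarrow> bool" where
  "simple_graph V E \<longleftrightarrow> finite V \<and> (\<forall>e\<in>E. e \<subseteq> V \<and> card e = 2)"

definition lambdaH :: "'a set \<Rightarrow> 'a set set \<Rightarrow> real" where
  "lambdaH V E = (real (card E) - 2) / (real (card V) - 2)"

definition balanced :: "'a set \<Rightarrow> 'a set set \<Rightarrow> bool" where
  "balanced V E \<longleftrightarrow> simple_graph V E \<and> card V \<ge> 4 \<and>
     real (card E) \<ge> 2 * real (card V) - 2 \<and>
     (\<forall>VF EF. VF \<subseteq> V \<and> EF \<subseteq> E \<and> (\<forall>e\<in>EF. e \<subseteq> VF) \<and> (VF, EF) \<noteq> (V, E)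
        \<and> card VF \<ge> 3 \<longrightarrow>
        (real (card EF) - 1) / (real (card VF) - 2) \<le> lambdaH V E)"

definition edge_seq :: "'a set set \<Rightarrow> (nat \<Rightarrow> 'a set) \<Rightarrow> bool" where
  "edge_seq E es \<longleftrightarrow> (\<forall>j\<ge>1. es j \<in> E \<and> es j \<inter> es (Suc j) = {})"

text \<open>H_d: copies H^(1..d) have vertices (x, j). Vertex (x, j) with j >= 2 and x an endpoint
  of e_j is identified with (x, j-1) (the endpoints of e_j in copies j-1 and j are glued).
  Since consecutive edges are disjoint, this representative map is canonical.\<close>

definition Hd_rep :: "(nat \<Rightarrow> 'a set) \<Rightarrow> 'a \<times> nat \<Rightarrow> 'a \<times> nat" where
  "Hd_rep es xj = (if 2 \<le> snd xj \<and> fst xj \<in> es (snd xj) then (fst xj, snd xj - 1) else xj)"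

definition Hd_V :: "'a set \<Rightarrow> (nat \<Rightarrow> 'a set) \<Rightarrow> nat \<Rightarrow> ('a \<times> nat) set" where
  "Hd_V V es d = Hd_rep es ` (V \<times> {1..d})"

text \<open>Edges: union of the images of all edges of all copies, minus e_1 of copy 1 and minus
  the shared edge e_{j+1} of copies j and j+1 (1 <= j <= d-1).\<close>

definition Hd_E :: "'a set set \<Rightarrow> (nat \<Rightarrow> 'a set) \<Rightarrow> nat \<Rightarrow> ('a \<times> nat) set set" where
  "Hd_E E es d =
     {Hd_rep es ` (e \<times> {j}) | e j. e \<in> E \<and> j \<in> {1..d}}
     - ({es 1 \<times> {1}} \<union> {es (Suc j) \<times> {j} | j. j \<in> {1..d - 1}})"

definition Hd_root :: "(nat \<Rightarrow> 'a set) \<Rightarrow> ('a \<times> nat) set" where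
  "Hd_root es = es 1 \<times> {1}"

definition Kn_edges :: "nat \<Rightarrow> nat set set" where
  "Kn_edges n = {e. e \<subseteq> {1..n} \<and> card e = 2}"

definition Gnp :: "nat \<Rightarrow> real \<Rightarrow> nat set set pmf" where
  "Gnp n p = map_pmf (\<lambda>f. {e \<in> Kn_edges n. f e}) (Pi_pmf (Kn_edges n) False (\<lambda>_. bernoulli_pmf p))"

definition rooted_copies ::
  "'b set \<Rightarrow> 'b set set \<Rightarrow> 'b set \<Rightarrow> nat \<Rightarrow> nat set set \<Rightarrow> nat \<Rightarrow> nat \<Rightarrow> (nat set \<times> nat set set) set" where
  "rooted_copies VH EH R n G u v =
     {(W, F). W \<subseteq> {1..n} \<and> F \<subseteq> G \<and>
        (\<exists>\<phi>. inj_on \<phi> VH \<and> \<phi> ` VH = W \<and> F = (\<lambda>e. \<phi> ` e) ` EH \<and> \<phi> ` R = {u, v})}"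

definition X_d :: "'a set \<Rightarrow> 'a set set \<Rightarrow> (nat \<Rightarrow> 'a set) \<Rightarrow> nat \<Rightarrow> nat \<Rightarrow> nat set set \<Rightarrow> nat \<Rightarrow> nat \<Rightarrow> nat" where
  "X_d V E es d n G u v = card (rooted_copies (Hd_V V es d) (Hd_E E es d) (Hd_root es) n G u v)"

end

theory Submission
  imports Defs
begin


locale hdsetup =
  fixes V :: "'a set" and E :: "'a set set" and es :: "nat \<Rightarrow> 'a set" and d :: nat
  assumes sg: "simple_graph V E" and esq: "edge_seq E es" and d1: "d \<ge> 1"
begin

lemma es_in: "j \<ge> 1 \<Longrightarrow> es j \<in> E" using esq by (auto simp: edge_seq_def)
lemma es_sub: "j \<ge> 1 \<Longrightarrow> es j \<subseteq> V" using es_in sg by (auto simp: simple_graph_def)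
lemma es_card: "j \<ge> 1 \<Longrightarrow> card (es j) = 2" using es_in sg by (auto simp: simple_graph_def)
lemma es_disj: "j \<ge> 1 \<Longrightarrow> es j \<inter> es (Suc j) = {}" using esq by (auto simp: edge_seq_def)
lemma es_fin: "j \<ge> 1 \<Longrightarrow> finite (es j)" by (metis es_card card.infinite zero_neq_numeral)
lemma finV: "finite V" using sg by (auto simp: simple_graph_def)
lemma finE: "finite E"
proof -
  have "E \<subseteq> Pow V" using sg by (auto simp: simple_graph_def)
  then show ?thesis using finV by (simp add: finite_subset)
qed

lemma cardE2: "card E \<ge> 2"
proof -
  have "es 1 \<noteq> es 2" using es_disj[of 1] es_card[of 1] by (auto simp: numeral_2_eq_2)
  then have "card {es 1, es 2} = 2" by simp
  moreover have "{es 1, es 2} \<subseteq> E" using es_in[of 1] es_in[of 2] by auto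
  moreover have "card {es 1, es 2} \<le> card E" using finE \<open>{es 1, es 2} \<subseteq> E\<close> by (rule card_mono)
  ultimately show ?thesis by simp
qed
lemma rep_one: "Hd_rep es ` (A \<times> {1}) = A \<times> {1}"
proof -
  have "Hd_rep es ` (A \<times> {1}) = (\<lambda>y. y) ` (A \<times> {1})" by (rule image_cong) (auto simp: Hd_rep_def)
  then show ?thesis by simp
qed
lemma rep_j: "j \<ge> 2 \<Longrightarrow> Hd_rep es ` (es j \<times> {j}) = es j \<times> {j - 1}"
proof -
  assume j: "j \<ge> 2"
  have "Hd_rep es ` (es j \<times> {j}) = (\<lambda>(x,i). (x, i - 1)) ` (es j \<times> {j})" by (rule image_cong) (auto simp: Hd_rep_def j)
  then show ?thesis by auto
qed
lemma rep_Suc: "j \<ge> 1 \<Longrightarrow> Hd_rep es ` (es (Suc j) \<times> {j}) = es (Suc j) \<times> {j}"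
proof -
  assume j: "j \<ge> 1"
  have "Hd_rep es ` (es (Suc j) \<times> {j}) = (\<lambda>y. y) ` (es (Suc j) \<times> {j})"
    using es_disj[OF j] by (intro image_cong) (auto simp: Hd_rep_def)
  then show ?thesis by simp
qed

definition D where "D = (\<Union>j\<in>{2..d}. es j \<times> {j})"

lemma HdV_eq: "Hd_V V es d = V \<times> {1..d} - D"
proof
  show "Hd_V V es d \<subseteq> V \<times> {1..d} - D"
  proof
    fix y assume "y \<in> Hd_V V es d"
    then obtain x j where xj: "x \<in> V" "j \<in> {1..d}" "y = Hd_rep es (x,j)" by (auto simp: Hd_V_def)
    show "y \<in> V \<times> {1..d} - D"
    proof (cases "2 \<le> j \<and> x \<in> es j")
      case True
      then have y: "y = (x, j - 1)" using xj by (simp add: Hd_rep_def)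
      have "x \<notin> es (j-1)" if "j - 1 \<ge> 2"
      proof -
        have j1: "Suc (j - 1) = j" "j - 1 \<ge> 1" using True that by auto
        have "es (j - 1) \<inter> es j = {}" using es_disj[OF j1(2)] unfolding j1(1) .
        then show ?thesis using True by blast
      qed
      then show ?thesis using y xj True by (auto simp: D_def)
    next
      case False
      then show ?thesis using xj by (auto simp: D_def Hd_rep_def)
    qed
  qed
next
  show "V \<times> {1..d} - D \<subseteq> Hd_V V es d"
  proof
    fix y assume y: "y \<in> V \<times> {1..d} - D"
    then obtain x j where xj: "y = (x,j)" "x \<in> V" "j \<in> {1..d}" by auto
    have "Hd_rep es (x,j) = (x,j)" using y xj by (auto simp: D_def Hd_rep_def)
    moreover have "(x, j) \<in> V \<times> {1..d}" using xj by auto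
    ultimately show "y \<in> Hd_V V es d" unfolding Hd_V_def xj(1) by force
  qed
qed

lemma card_D: "card D = 2 * (d - 1)"
proof -
  have "card D = (\<Sum>j\<in>{2..d}. card (es j \<times> {j}))" unfolding D_def
    using es_fin by (intro card_UN_disjoint) auto
  also have "\<dots> = (\<Sum>j\<in>{2..d}. 2)" by (intro sum.cong) (auto simp: card_cartesian_product es_card)
  finally show ?thesis by simp
qed

lemma card_HdV: "card (Hd_V V es d) = d * (card V - 2) + 2"
proof -
  have "D \<subseteq> V \<times> {1..d}" unfolding D_def
  proof (intro UN_least)
    fix j assume "j \<in> {2..d}" then show "es j \<times> {j} \<subseteq> V \<times> {1..d}" using es_sub[of j] by auto
  qed
  then have "card (V \<times> {1..d} - D) = card V * d - 2 * (d - 1)"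
    using card_D finV by (simp add: card_Diff_subset finite_subset card_cartesian_product)
  moreover have "card V \<ge> 2" using card_mono[OF finV es_sub[of 1]] es_card[of 1] by simp
  ultimately have cc: "card (Hd_V V es d) = card V * d - 2 * (d - 1)" using HdV_eq by simp
  define c where "c = card V - 2"
  define m where "m = d - 1"
  have c: "card V = c + 2" using \<open>card V \<ge> 2\<close> unfolding c_def by simp
  have m: "d = m + 1" using d1 unfolding m_def by simp
  show ?thesis unfolding cc unfolding c m by (simp add: algebra_simps)
qed

lemma finite_HdV: "finite (Hd_V V es d)" using finV by (simp add: Hd_V_def)

lemma root_sub: "Hd_root es \<subseteq> Hd_V V es d" 
  unfolding HdV_eq Hd_root_def D_def using d1 es_sub[of 1] by force

lemma root_card: "card (Hd_root es) = 2" using es_card[of 1] by (simp add: Hd_root_def card_cartesian_product)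

lemma rep_inj: "inj_on (Hd_rep es) (e \<times> {j})"
  by (auto simp: inj_on_def Hd_rep_def split: if_splits)

lemma HdE_edges: "f \<in> Hd_E E es d \<Longrightarrow> f \<subseteq> Hd_V V es d \<and> card f = 2"
proof -
  assume "f \<in> Hd_E E es d"
  then obtain e j where ej: "e \<in> E" "j \<in> {1..d}" "f = Hd_rep es ` (e \<times> {j})" by (auto simp: Hd_E_def)
  have "e \<subseteq> V" "card e = 2" using sg ej by (auto simp: simple_graph_def)
  have "f \<subseteq> Hd_V V es d" unfolding Hd_V_def ej(3) using \<open>e \<subseteq> V\<close> ej(2) by (intro image_mono) auto
  moreover have "card f = 2" unfolding ej(3) using rep_inj[of e j] \<open>card e = 2\<close>
    by (simp add: card_image card_cartesian_product)
  ultimately show ?thesis by simp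
qed

lemma finite_HdE: "finite (Hd_E E es d)"
proof -
  have "Hd_E E es d \<subseteq> Pow (Hd_V V es d)" using HdE_edges by blast
  moreover have "finite (Pow (Hd_V V es d))" using finite_HdV by simp
  ultimately show ?thesis by (rule finite_subset)
qed

definition B where "B j = (\<lambda>e. Hd_rep es ` (e \<times> {j})) ` (E - {es j} - (if j < d then {es (Suc j)} else {}))"

lemma HdE_sub: "Hd_E E es d \<subseteq> (\<Union>j\<in>{1..d}. B j)"
proof
  fix f assume f: "f \<in> Hd_E E es d"
  then obtain e j where ej: "e \<in> E" "j \<in> {1..d}" "f = Hd_rep es ` (e \<times> {j})" by (auto simp: Hd_E_def)
  have nr: "f \<noteq> es 1 \<times> {1}" "\<And>i. i \<in> {1..d-1} \<Longrightarrow> f \<noteq> es (Suc i) \<times> {i}"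
    using f by (auto simp: Hd_E_def)
  have "e \<noteq> es j"
  proof
    assume e: "e = es j"
    show False
    proof (cases "j = 1")
      case True then show False using nr ej e rep_one by simp
    next
      case False
      then have "f = es j \<times> {j - 1}" using ej e rep_j[of j] by simp
      moreover have "j - 1 \<in> {1..d-1}" "Suc (j-1) = j" using False ej by auto
      ultimately show False using nr(2)[of "j-1"] by metis
    qed
  qed
  moreover have "e \<noteq> es (Suc j)" if "j < d"
  proof
    assume e: "e = es (Suc j)"
    have "f = es (Suc j) \<times> {j}" using ej e rep_Suc[of j] by simp
    moreover have "j \<in> {1..d-1}" using that ej by auto
    ultimately show False using nr(2)[of j] by blast
  qed
  ultimately have "f \<in> B j" unfolding B_def using ej by (intro image_eqI[where x=e]) auto
  then show "f \<in> (\<Union>j\<in>{1..d}. B j)" using ej by blast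
qed

lemma card_B: "j \<in> {1..d} \<Longrightarrow> card (B j) \<le> (if j < d then card E - 2 else card E - 1)"
proof -
  assume j: "j \<in> {1..d}"
  have c: "card (B j) \<le> card (E - {es j} - (if j < d then {es (Suc j)} else {}))"
    unfolding B_def using finE by (intro card_image_le) auto
  show ?thesis
  proof (cases "j < d")
    case True
    have "es j \<noteq> es (Suc j)" using es_disj[of j] es_card[of j] j by fastforce
    then have "card (E - {es j} - {es (Suc j)}) = card E - 2"
      using es_in[of j] es_in[of "Suc j"] j finE by (simp add: card_Diff_singleton_if)
    then show ?thesis using c True by simp
  next
    case False
    then show ?thesis using c es_in[of j] j finE by (simp add: card_Diff_singleton_if)
  qed
qed

lemma card_HdE: "card (Hd_E E es d) \<le> d * (card E - 2) + 1"
proof -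
  have fB: "finite (B j)" for j unfolding B_def using finE by auto
  have "card (Hd_E E es d) \<le> card (\<Union>j\<in>{1..d}. B j)"
    using HdE_sub fB by (intro card_mono) auto
  also have "\<dots> \<le> (\<Sum>j\<in>{1..d}. card (B j))" by (rule card_UN_le) auto
  also have "\<dots> \<le> (\<Sum>j\<in>{1..d}. (if j < d then card E - 2 else card E - 1))"
    by (intro sum_mono card_B)
  also have "{1..d} = insert d {1..<d}" using d1 by auto
  also have "(\<Sum>j\<in>insert d {1..<d}. (if j < d then card E - 2 else card E - 1))
      = (card E - 1) + (\<Sum>j\<in>{1..<d}. card E - 2)" by (simp add: sum.insert)
  also have "\<dots> = (card E - 1) + (d - 1) * (card E - 2)" by simp
  also have "\<dots> \<le> d * (card E - 2) + 1"
  proof -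
    define c where "c = card E - 2"
    define m where "m = d - 1"
    have c: "card E = c + 2" using cardE2 unfolding c_def by simp
    have m: "d = m + 1" using d1 unfolding m_def by simp
    show ?thesis unfolding c m by (simp add: algebra_simps)
  qed
  finally show ?thesis .
qed

end



lemma finite_Kn: "finite (Kn_edges n)"
  by (rule finite_subset[of _ "Pow {1..n}"]) (auto simp: Kn_edges_def)

lemma prob_sub:
  assumes F: "F \<subseteq> Kn_edges n" and q: "0 \<le> q" "q \<le> 1"
  shows "measure_pmf.prob (Gnp n q) {G. F \<subseteq> G} = q ^ card F"
proof -
  have pre: "(\<lambda>f. {e \<in> Kn_edges n. f e}) -` {G. F \<subseteq> G} = Pi (Kn_edges n) (\<lambda>e. if e \<in> F then {True} else UNIV)"
    using F by (auto simp: Pi_def)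
  have "measure_pmf.prob (Gnp n q) {G. F \<subseteq> G}
     = measure_pmf.prob (Pi_pmf (Kn_edges n) False (\<lambda>_. bernoulli_pmf q)) (Pi (Kn_edges n) (\<lambda>e. if e \<in> F then {True} else UNIV))"
    unfolding Gnp_def measure_map_pmf pre ..
  also have "\<dots> = (\<Prod>e\<in>Kn_edges n. measure_pmf.prob (bernoulli_pmf q) (if e \<in> F then {True} else UNIV))"
    by (rule measure_Pi_pmf_Pi) (rule finite_Kn)
  also have "\<dots> = (\<Prod>e\<in>Kn_edges n. if e \<in> F then q else 1)"
    by (intro prod.cong) (auto simp: measure_pmf_single q)
  also have "\<dots> = q ^ card F"
  proof -
    have "{x \<in> Kn_edges n. x \<in> F} = F" using F by auto
    then show ?thesis using finite_Kn[of n] by (simp add: prod.If_cases Int_def)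
  qed
  finally show ?thesis .
qed

lemma expect_count:
  assumes C: "finite C" and Cp: "\<And>c. c \<in> C \<Longrightarrow> snd c \<subseteq> Kn_edges n \<and> card (snd c) = m"
    and q: "0 \<le> q" "q \<le> 1"
  shows "measure_pmf.expectation (Gnp n q) (\<lambda>G. real (card {c\<in>C. snd c \<subseteq> G})) = real (card C) * q ^ m"
proof -
  have eq: "real (card {c\<in>C. snd c \<subseteq> G}) = (\<Sum>c\<in>C. indicator {G. snd c \<subseteq> G} G)" for G
  proof -
    have "real (card {c\<in>C. snd c \<subseteq> G}) = (\<Sum>c\<in>{c\<in>C. snd c \<subseteq> G}. (1::real))" by simp
    also have "\<dots> = (\<Sum>c\<in>C. if snd c \<subseteq> G then 1 else 0)" using C by (rule sum.inter_filter)
    finally show ?thesis by (simp add: indicator_def of_bool_def)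
  qed
  have "measure_pmf.expectation (Gnp n q) (\<lambda>G. real (card {c\<in>C. snd c \<subseteq> G}))
      = measure_pmf.expectation (Gnp n q) (\<lambda>G. \<Sum>c\<in>C. indicator {G. snd c \<subseteq> G} G)"
    by (simp only: eq)
  also have "\<dots> = (\<Sum>c\<in>C. measure_pmf.expectation (Gnp n q) (indicator {G. snd c \<subseteq> G}))"
    by (rule Bochner_Integration.integral_sum) (auto simp: integrable_indicator_iff measure_pmf.emeasure_finite top.not_eq_extremum[symmetric])
  also have "\<dots> = (\<Sum>c\<in>C. q ^ m)"
    by (intro sum.cong) (auto simp: prob_sub Cp q)
  finally show ?thesis by simp
qed



definition candC :: "'b set \<Rightarrow> 'b set set \<Rightarrow> 'b set \<Rightarrow> nat \<Rightarrow> nat \<Rightarrow> nat \<Rightarrow> (nat set \<times> nat set set) set" where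
  "candC VH EH R n u v = {(W, F). W \<subseteq> {1..n} \<and>
        (\<exists>\<phi>. inj_on \<phi> VH \<and> \<phi> ` VH = W \<and> F = (\<lambda>e. \<phi> ` e) ` EH \<and> \<phi> ` R = {u, v})}"

lemma rooted_eq: "rooted_copies VH EH R n G u v = {c \<in> candC VH EH R n u v. snd c \<subseteq> G}"
  unfolding rooted_copies_def candC_def by auto

context
  fixes VH :: "'b set" and EH R and n u v :: nat
  assumes finVH: "finite VH" and RV: "R \<subseteq> VH" and cR: "card R = 2"
    and EHe: "\<And>e. e \<in> EH \<Longrightarrow> e \<subseteq> VH \<and> card e = 2"
    and uv: "u \<in> {1..n}" "v \<in> {1..n}" "u \<noteq> v"
begin

lemma cand_props: "c \<in> candC VH EH R n u v \<Longrightarrow> snd c \<subseteq> Kn_edges n \<and> card (snd c) = card EH"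
proof -
  assume "c \<in> candC VH EH R n u v"
  then obtain W \<phi> where c: "c = (W, (\<lambda>e. \<phi> ` e) ` EH)" "W \<subseteq> {1..n}" "inj_on \<phi> VH" "\<phi> ` VH = W"
    unfolding candC_def by auto
  have "\<phi> ` e \<in> Kn_edges n" if "e \<in> EH" for e
  proof -
    have "e \<subseteq> VH" "card e = 2" using EHe that by auto
    then have "card (\<phi> ` e) = 2" using c(3) by (metis card_image inj_on_subset)
    moreover have "\<phi> ` e \<subseteq> {1..n}" using c \<open>e \<subseteq> VH\<close> by auto
    ultimately show ?thesis by (simp add: Kn_edges_def)
  qed
  moreover have "inj_on (image \<phi>) EH"
    using inj_on_image_Pow[OF c(3)] EHe by (meson PowI inj_on_subset subsetI)
  ultimately show ?thesis using c(1) by (auto simp: card_image)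
qed

lemma cand_finite: "finite (candC VH EH R n u v)"
proof -
  have "candC VH EH R n u v \<subseteq> Pow {1..n} \<times> Pow (Pow {1..n})"
    unfolding candC_def by (force dest: EHe)
  then show ?thesis by (rule finite_subset) auto
qed

lemma cand_card: "card VH \<le> n \<Longrightarrow> (n - 2) choose (card VH - 2) \<le> card (candC VH EH R n u v)"
proof -
  assume le: "card VH \<le> n"
  define k where "k = card VH - 2"
  define Sset where "Sset = {S. S \<subseteq> {1..n} - {u, v} \<and> card S = k}"
  have "card ({1..n} - {u,v}) = n - 2" using uv by (simp add: card_Diff_subset)
  then have cS: "card Sset = (n - 2) choose k" unfolding Sset_def by (simp add: n_subsets)
  have "card {u, v} = 2" using uv by simp
  then obtain r where r: "bij_betw r R {u, v}"
    using cR finite_same_card_bij by (metis card.infinite finite.emptyI finite.insertI zero_neq_numeral)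
  have cVR: "card (VH - R) = k" using RV cR finVH by (simp add: card_Diff_subset finite_subset k_def)
  define h where "h S = (SOME f. bij_betw f (VH - R) S)" for S :: "nat set"
  have h: "bij_betw (h S) (VH - R) S" if "S \<in> Sset" for S
  proof -
    have "finite S" "card S = k" using that unfolding Sset_def by (auto intro: finite_subset)
    then have "\<exists>h. bij_betw h (VH - R) S" using cVR finVH by (intro finite_same_card_bij) auto
    then show ?thesis unfolding h_def by (rule someI_ex)
  qed
  define \<phi> where "\<phi> S x = (if x \<in> R then r x else h S x)" for S x
  define g where "g S = (S \<union> {u, v}, (\<lambda>e. \<phi> S ` e) ` EH)" for S
  have gC: "g S \<in> candC VH EH R n u v" if S: "S \<in> Sset" for S
  proof -
    have SS: "S \<subseteq> {1..n} - {u, v}" using S unfolding Sset_def by auto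
    have i1: "inj_on (\<phi> S) R" using r unfolding bij_betw_def \<phi>_def by (simp add: inj_on_def)
    have i2: "inj_on (\<phi> S) (VH - R)" using h[OF S] unfolding bij_betw_def \<phi>_def by (simp add: inj_on_def)
    have im1: "\<phi> S ` R = {u, v}" using r unfolding bij_betw_def \<phi>_def by simp
    have im2: "\<phi> S ` (VH - R) = S" using h[OF S] unfolding bij_betw_def \<phi>_def by simp
    have VU: "VH = R \<union> (VH - R)" using RV by auto
    have inj: "inj_on (\<phi> S) VH"
    proof (rule inj_onI)
      fix x y assume xy: "x \<in> VH" "y \<in> VH" "\<phi> S x = \<phi> S y"
      show "x = y"
      proof (cases "x \<in> R")
        case True
        show ?thesis
        proof (cases "y \<in> R")
          case True
          then show ?thesis using \<open>x \<in> R\<close> xy i1 by (meson inj_onD)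
        next
          case False
          have "\<phi> S x \<in> {u,v}" using im1 True by blast
          moreover have "\<phi> S y \<in> S" using im2 False xy by blast
          ultimately show ?thesis using xy SS by auto
        qed
      next
        case False
        show ?thesis
        proof (cases "y \<in> R")
          case True
          have "\<phi> S y \<in> {u,v}" using im1 True by blast
          moreover have "\<phi> S x \<in> S" using im2 False xy by blast
          ultimately show ?thesis using xy SS by auto
        next
          case F2: False
          then show ?thesis using False xy i2 by (meson inj_onD DiffI)
        qed
      qed
    qed
    have "\<phi> S ` VH = S \<union> {u, v}" using im1 im2 VU by (metis Un_commute image_Un)
    then show ?thesis unfolding candC_def g_def using inj im1 SS uv by auto
  qed
  have "inj_on g Sset"
  proof (rule inj_onI)
    fix S T assume "S \<in> Sset" "T \<in> Sset" "g S = g T"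
    then have "S \<union> {u,v} = T \<union> {u,v}" "S \<inter> {u,v} = {}" "T \<inter> {u,v} = {}"
      unfolding g_def Sset_def by auto
    then show "S = T" by blast
  qed
  then have "card Sset = card (g ` Sset)" by (simp add: card_image)
  also have "\<dots> \<le> card (candC VH EH R n u v)" using gC cand_finite by (intro card_mono) auto
  finally show ?thesis using cS k_def by simp
qed
end



lemma main_bound:
  fixes V :: "'a set" and E es and d n u v :: nat and q w :: real
  assumes bal: "balanced V E" and esq: "edge_seq E es"
    and q: "0 < q" "q \<le> 1" and uv: "u \<in> {1..n}" "v \<in> {1..n}" "u \<noteq> v"
    and w: "w > 0" and c1: "q powr lambdaH V E * real n \<ge> w * real (card V) * real d"
    and c2: "w ^ ((card V - 2) * d) \<ge> real n" and n2: "n \<ge> 2"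
  shows "measure_pmf.expectation (Gnp n q) (\<lambda>G. real (X_d V E es d n G u v)) \<ge> q * real n"
proof -
  define v0 where "v0 = card V"
  define e0 where "e0 = card E"
  define lam where "lam = lambdaH V E"
  have sg: "simple_graph V E" and v4: "v0 \<ge> 4" and e0: "real e0 \<ge> 2 * real v0 - 2"
    using bal unfolding balanced_def v0_def e0_def by auto
  have d1: "d \<ge> 1"
  proof (rule ccontr)
    assume "\<not> d \<ge> 1" then have "d = 0" by simp
    then show False using c2 n2 by simp
  qed
  interpret hdsetup V E es d using sg esq d1 by unfold_locales
  define K where "K = (v0 - 2) * d"
  have K1: "K \<ge> 1" using v4 d1 unfolding K_def by simp
  have w1: "w \<ge> 1"
  proof (rule ccontr)
    assume "\<not> w \<ge> 1"
    then have "w ^ K \<le> 1" using w by (intro power_le_one) auto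
    then show False using c2 n2 unfolding K_def v0_def by simp
  qed
  have lam_eq: "lam = (real e0 - 2) / (real v0 - 2)" unfolding lam_def lambdaH_def e0_def v0_def ..
  have lam0: "lam \<ge> 0" using lam_eq v4 e0 by simp
  define L where "L = q powr lam"
  have L0: "L > 0" using q by (simp add: L_def)
  have L1: "L \<le> 1" unfolding L_def using q lam0 by (metis powr_mono2 powr_one_eq_one less_imp_le)
  have c1': "L * real n \<ge> w * real v0 * real d" using c1 unfolding L_def lam_def v0_def .
  have rK: "real K = (real v0 - 2) * real d" using v4 unfolding K_def by (simp add: of_nat_diff)
  have Kn: "K + 2 \<le> n"
  proof -
    have "real n \<ge> L * real n" using L0 L1 by (intro mult_left_le_one_le) auto
    also have "L * real n \<ge> w * real v0 * real d" by (rule c1')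
    moreover have "w * real v0 * real d \<ge> real v0 * real d" using w1 mult_right_mono[of 1 w "real v0 * real d"] by (simp add: mult.assoc)
    moreover have "real v0 * real d \<ge> real K + 2" using rK d1 by (simp add: algebra_simps)
    ultimately have "real n \<ge> real K + 2" by linarith
    then show ?thesis by linarith
  qed
  define VH where "VH = Hd_V V es d"
  define EH where "EH = Hd_E E es d"
  define R where "R = Hd_root es"
  have cVH: "card VH = K + 2" unfolding VH_def K_def v0_def using card_HdV by (simp add: mult.commute)
  have finVH: "finite VH" unfolding VH_def by (rule finite_HdV)
  have RV: "R \<subseteq> VH" unfolding R_def VH_def by (rule root_sub)
  have cR: "card R = 2" unfolding R_def by (rule root_card)
  have EHe: "\<And>e. e \<in> EH \<Longrightarrow> e \<subseteq> VH \<and> card e = 2" unfolding EH_def VH_def by (rule HdE_edges)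
  define M where "M = d * (e0 - 2) + 1"
  have cEH: "card EH \<le> M" unfolding EH_def M_def e0_def by (rule card_HdE)
  define C where "C = candC VH EH R n u v"
  have finC: "finite C" unfolding C_def by (rule cand_finite[OF finVH RV cR EHe uv])
  have Cp: "\<And>c. c \<in> C \<Longrightarrow> snd c \<subseteq> Kn_edges n \<and> card (snd c) = card EH"
    unfolding C_def by (rule cand_props[OF finVH RV cR EHe uv])
  have cC: "(n - 2) choose K \<le> card C"
    using cand_card[OF finVH RV cR EHe uv] cVH Kn unfolding C_def by simp
  have Xeq: "(\<lambda>G. real (X_d V E es d n G u v)) = (\<lambda>G. real (card {c\<in>C. snd c \<subseteq> G}))"
    unfolding X_d_def C_def VH_def EH_def R_def rooted_eq ..
  have expE: "measure_pmf.expectation (Gnp n q) (\<lambda>G. real (X_d V E es d n G u v)) = real (card C) * q ^ card EH"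
    unfolding Xeq using expect_count[OF finC Cp] q by simp
  have b1: "real (card C) \<ge> ((real n - 2) / real K) ^ K"
  proof -
    have "((real (n - 2)) / real K) ^ K \<le> real ((n - 2) choose K)"
      using Kn by (intro binomial_ge_n_over_k_pow_k) simp
    also have "\<dots> \<le> real (card C)" using cC by simp
    finally show ?thesis using n2 by (simp add: of_nat_diff)
  qed
  have b2: "q ^ card EH \<ge> q ^ M" using cEH q by (intro power_decreasing) auto
  have e2: "e0 \<ge> 2" using cardE2 unfolding e0_def .
  have b3: "q ^ M = q * L ^ K"
  proof -
    have "L ^ K = q powr (lam * real K)"
      unfolding L_def using q by (simp add: powr_realpow[symmetric] powr_powr)
    also have "lam * real K = real (d * (e0 - 2))"
      using v4 e2 unfolding lam_eq rK by (simp add: of_nat_diff field_simps)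
    also have "q powr real (d * (e0 - 2)) = q ^ (d * (e0 - 2))" using q by (subst powr_realpow) simp_all
    finally show ?thesis unfolding M_def by simp
  qed
  have ratio: "(real n - 2) * L / real K \<ge> w"
  proof -
    have "(real n - 2) * L \<ge> L * real n - 2" using L1 by (simp add: algebra_simps)
    moreover have "w * real v0 * real d - 2 \<ge> w * real K"
    proof -
      have "w * real d \<ge> 1" using w1 d1 mult_mono[of 1 w 1 "real d"] by simp
      then show ?thesis unfolding rK by (simp add: algebra_simps)
    qed
    ultimately have "(real n - 2) * L \<ge> w * real K" using c1' by linarith
    then show ?thesis using K1 by (simp add: pos_le_divide_eq)
  qed
  have "measure_pmf.expectation (Gnp n q) (\<lambda>G. real (X_d V E es d n G u v)) \<ge> ((real n - 2) / real K) ^ K * (q * L ^ K)"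
    unfolding expE using b1 b2 b3 q L0 by (intro mult_mono) auto
  also have "((real n - 2) / real K) ^ K * (q * L ^ K) = q * ((real n - 2) * L / real K) ^ K"
    unfolding power_divide power_mult_distrib by (simp add: mult_ac)
  also have "\<dots> \<ge> q * w ^ K" using ratio w q by (intro mult_left_mono power_mono) auto
  also have "q * w ^ K \<ge> q * real n" using c2 q unfolding K_def v0_def by simp
  finally show ?thesis .
qed

theorem lemma2p4:
  fixes V :: "'a set" and E :: "'a set set" and es :: "nat \<Rightarrow> 'a set"
    and p :: "nat \<Rightarrow> real" and d :: "nat \<Rightarrow> nat" and \<omega> :: "nat \<Rightarrow> real"
    and u v :: "nat \<Rightarrow> nat"
  assumes "balanced V E"
    and "edge_seq E es"
    and "\<forall>n. 0 \<le> p n \<and> p n \<le> 1"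
    and "eventually (\<lambda>n. u n \<in> {1..n} \<and> v n \<in> {1..n} \<and> u n \<noteq> v n) sequentially"
    and "eventually (\<lambda>n. \<omega> n > 0 \<and>
            p n powr lambdaH V E * real n \<ge> \<omega> n * real (card V) * real (d n) \<and>
            \<omega> n ^ ((card V - 2) * d n) \<ge> real n) sequentially"
    and "filterlim (\<lambda>n. p n * real n) at_top sequentially"
  shows "filterlim (\<lambda>n. measure_pmf.expectation (Gnp n (p n))
            (\<lambda>G. real (X_d V E es (d n) n G (u n) (v n)))) at_top sequentially"
proof -
  have ev1: "eventually (\<lambda>n. 1 \<le> p n * real n) sequentially"
    using assms(6) by (simp add: filterlim_at_top)
  have "eventually (\<lambda>n. p n * real n \<le> measure_pmf.expectation (Gnp n (p n))
            (\<lambda>G. real (X_d V E es (d n) n G (u n) (v n)))) sequentially"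
    using assms(4) assms(5) ev1 eventually_ge_at_top[of 2]
  proof eventually_elim
    case (elim n)
    have q: "0 \<le> p n" "p n \<le> 1" using assms(3) by auto
    have "p n \<noteq> 0" using elim by auto
    then have q0: "0 < p n" using q by simp
    have "p n * real n \<le> measure_pmf.expectation (Gnp n (p n))
            (\<lambda>G. real (X_d V E es (d n) n G (u n) (v n)))"
      using main_bound[OF assms(1) assms(2) q0 q(2), of "u n" n "v n" "\<omega> n" "d n"] elim
      by auto
    then show ?case .
  qed
  then show ?thesis using assms(6) by (rule filterlim_at_top_mono[rotated])
qed

end
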